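(* Let $A\in\mathbb{C}^{m\times n}$, $B\in\mathbb{C}^{n\times p}$, $C\in\mathbb{C}^{p\times q}$ and $M=ABC$. For any $(AB)^{(1)}\in\{(AB)^{(1)}\}$ and $(BC)^{(1)}\in\{(BC)^{(1)}\}$, put $P=I_p-(AB)^{(1)}AB$ and $Q=I_n-BC(BC)^{(1)}$. Then for every $\{1\}$-generalized inverse $(QBP)^{(1)}$ of $QBP$, the matrix $$X=(BC)^{(1)}B(AB)^{(1)}-(BC)^{(1)}BP(QBP)^{(1)}QB(AB)^{(1)}$$ satisfies $MXM=M$.
   Context: For $X\in\mathbb{C}^{p\times q}$, a matrix $G\in\mathbb{C}^{q\times p}$ is called a $\{1\}$-generalized inverse of $X$ (written $X^{(1)}$) if $XGX=X$; $\{X^{(1)}\}$ denotes the set of all such $G$. $I_k$ is the $k\times k$ identity matrix. *)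

theory Defs
  imports "Jordan_Normal_Form.Matrix" Complex_Main
begin

definition is_g1_inverse :: "complex mat \<Rightarrow> complex mat \<Rightarrow> nat \<Rightarrow> nat \<Rightarrow> bool" where
  "is_g1_inverse X G p q \<longleftrightarrow> X \<in> carrier_mat p q \<and> G \<in> carrier_mat q p \<and> X * G * X = X"

end

theory Submission
  imports Defs
begin

declare assoc_mult_mat[simp del]

lemma massoc: assumes "dim_col A = dim_row B" "dim_col B = dim_row C"
  shows "(A*B)*C = A*(B*(C::complex mat))"
proof -
  have a: "A \<in> carrier_mat (dim_row A) (dim_row B)" using assms(1) unfolding carrier_mat_def by simp
  have b: "B \<in> carrier_mat (dim_row B) (dim_row C)" using assms(2) unfolding carrier_mat_def by simp
  have c: "C \<in> carrier_mat (dim_row C) (dim_col C)" unfolding carrier_mat_def by simp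
  show ?thesis by (rule assoc_mult_mat[OF a b c])
qed

lemma mdistL: assumes "dim_col A = dim_row B" "dim_row C = dim_row B" "dim_col C = dim_col B"
  shows "A*(B - C) = A*B - A*(C::complex mat)"
proof -
  have a: "A \<in> carrier_mat (dim_row A) (dim_row B)" using assms(1) unfolding carrier_mat_def by simp
  have b: "B \<in> carrier_mat (dim_row B) (dim_col B)" unfolding carrier_mat_def by simp
  have c: "C \<in> carrier_mat (dim_row B) (dim_col B)" using assms(2,3) unfolding carrier_mat_def by simp
  show ?thesis by (rule mult_minus_distrib_mat[OF a b c])
qed

lemma mdistR: assumes "dim_row A = dim_row B" "dim_col A = dim_col B" "dim_col B = dim_row C"
  shows "(A - B)*C = A*C - B*(C::complex mat)"
proof -
  have a: "A \<in> carrier_mat (dim_row B) (dim_row C)" using assms unfolding carrier_mat_def by simp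
  have b: "B \<in> carrier_mat (dim_row B) (dim_row C)" using assms unfolding carrier_mat_def by simp
  have c: "C \<in> carrier_mat (dim_row C) (dim_col C)" unfolding carrier_mat_def by simp
  show ?thesis by (rule minus_mult_distrib_mat[OF a b c])
qed

lemma msubsub: "dim_row Y = dim_row Z \<Longrightarrow> dim_col Y = dim_col Z \<Longrightarrow> Z - (Z - Y) = (Y::complex mat)"
  by (intro eq_matI) auto

lemma mzerosub: "dim_row Y = r \<Longrightarrow> dim_col Y = c \<Longrightarrow> 0\<^sub>m r c - Y = - (Y::complex mat)"
  by (intro eq_matI) auto

lemma msubneg: "dim_row Y = dim_row Z \<Longrightarrow> dim_col Y = dim_col Z \<Longrightarrow> Y - (- Z) = Y + (Z::complex mat)"
  by (intro eq_matI) auto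

lemma mcancel: "dim_row Y = dim_row Z \<Longrightarrow> dim_col Y = dim_col Z \<Longrightarrow> (Y + Z) - Z = (Y::complex mat)"
  by (intro eq_matI) auto

lemma mselfsub: "Y - Y = 0\<^sub>m (dim_row Y) (dim_col (Y::complex mat))"
  by (intro eq_matI) auto


theorem theorem3p4:
  fixes A B C ABi BCi QBPi :: "complex mat" and m n p q :: nat
  assumes "A \<in> carrier_mat m n" and "B \<in> carrier_mat n p" and "C \<in> carrier_mat p q"
    and "is_g1_inverse (A * B) ABi m p"
    and "is_g1_inverse (B * C) BCi n q"
    and "is_g1_inverse ((1\<^sub>m n - B * C * BCi) * B * (1\<^sub>m p - ABi * (A * B)))
           QBPi n p"
  shows "A * B * C * (BCi * B * ABi
           - BCi * B * (1\<^sub>m p - ABi * (A * B)) * QBPi * (1\<^sub>m n - B * C * BCi) * B * ABi)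
         * (A * B * C) = A * B * C"
proof -
  define P where "P = 1\<^sub>m p - ABi * (A * B)"
  define Q where "Q = 1\<^sub>m n - B * C * BCi"
  define G where "G = QBPi"
  have dA: "dim_row A = m" "dim_col A = n" using assms(1) by auto
  have dB: "dim_row B = n" "dim_col B = p" using assms(2) by auto
  have dC: "dim_row C = p" "dim_col C = q" using assms(3) by auto
  have dG1: "dim_row ABi = p" "dim_col ABi = m" and g1: "A*B*ABi*(A*B) = A*B"
    using assms(4) unfolding is_g1_inverse_def by auto
  have dG2: "dim_row BCi = q" "dim_col BCi = n" and g2: "B*C*BCi*(B*C) = B*C"
    using assms(5) unfolding is_g1_inverse_def by auto
  have dP: "dim_row P = p" "dim_col P = p" unfolding P_def using dG1 dB by auto
  have dQ: "dim_row Q = n" "dim_col Q = n" unfolding Q_def using dB dG2 by auto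
  have dG: "dim_row G = p" "dim_col G = n" and g3: "Q*B*P*G*(Q*B*P) = Q*B*P"
    using assms(6) unfolding is_g1_inverse_def P_def[symmetric] Q_def[symmetric] G_def[symmetric] by auto
  note dims = dA dB dC dG1 dG2 dP dQ dG
  have g1': "A*(B*(ABi*(A*(B*X)))) = A*(B*X)" if "dim_row X = p" for X
  proof -
    have "A*(B*(ABi*(A*(B*X)))) = (A*B*ABi*(A*B))*X" using that dims by (simp add: massoc)
    also have "\<dots> = A*(B*X)" using g1 that dims by (simp add: massoc)
    finally show ?thesis .
  qed
  have fP: "ABi*(A*(B*Z)) = Z - P*Z" if "dim_row Z = p" for Z
  proof -
    have "P*Z = Z - ABi*(A*(B*Z))" unfolding P_def using that dims
      by (simp add: mdistR massoc)
    then have "Z - P*Z = Z - (Z - ABi*(A*(B*Z)))" by simp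
    also have "\<dots> = ABi*(A*(B*Z))" using that dims by (simp add: msubsub)
    finally show ?thesis by simp
  qed
  have fQ: "B*(C*(BCi*Y)) = Y - Q*Y" if "dim_row Y = n" for Y
  proof -
    have "Q*Y = Y - B*(C*(BCi*Y))" unfolding Q_def using that dims
      by (simp add: mdistR massoc)
    then have "Y - Q*Y = Y - (Y - B*(C*(BCi*Y)))" by simp
    also have "\<dots> = B*(C*(BCi*Y))" using that dims by (simp add: msubsub)
    finally show ?thesis by simp
  qed
  have z1: "A*(B*(P*V)) = 0\<^sub>m m (dim_col V)" if "dim_row V = p" for V
  proof -
    have "A*(B*P) = A*B - A*B*ABi*(A*B)" unfolding P_def using dims
      by (simp add: mdistL massoc)
    also have "\<dots> = 0\<^sub>m m p" using g1 dims by (simp add: mselfsub)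
    finally have "A*(B*P) = 0\<^sub>m m p" .
    moreover have "A*(B*(P*V)) = (A*(B*P))*V" using that dims by (simp add: massoc)
    ultimately show ?thesis using that by simp
  qed
  have z2: "Q*(B*C) = 0\<^sub>m n q"
  proof -
    have "Q*(B*C) = B*C - B*C*BCi*(B*C)" unfolding Q_def using dims
      by (simp add: mdistR massoc)
    also have "\<dots> = 0\<^sub>m n q" using g2 dims by (simp add: mselfsub)
    finally show ?thesis .
  qed
  have hT: "Q*(B*(P*(G*(Q*(B*(P*X)))))) = Q*(B*(P*X))" if "dim_row X = p" for X
  proof -
    have "Q*(B*(P*(G*(Q*(B*(P*X)))))) = (Q*B*P*G*(Q*B*P))*X" using that dims by (simp add: massoc)
    also have "\<dots> = Q*(B*(P*X))" using g3 that dims by (simp add: massoc)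
    finally show ?thesis .
  qed
  define R where "R = Q*(B*(P*C))"
  have dR: "dim_row R = n" "dim_col R = q" unfolding R_def using dims by auto
  have W: "B*(ABi*(A*(B*C))) = B*C - B*(P*C)"
    using dims by (simp add: fP mdistL)
  have QW: "Q*(B*(ABi*(A*(B*C)))) = - R"
    unfolding W R_def using dims by (simp add: mdistL z2 mzerosub)
  have first: "A * B * C * (BCi * B * ABi) * (A * B * C) = A*(B*C) + A*R"
  proof -
    define Y where "Y = B*(ABi*(A*(B*C)))"
    have dY: "dim_row Y = n" "dim_col Y = q" unfolding Y_def using dims by auto
    have "A * B * C * (BCi * B * ABi) * (A * B * C) = A*(B*(C*(BCi*Y)))"
      unfolding Y_def using dims by (simp add: massoc)
    also have "\<dots> = A*(Y - Q*Y)" using dY by (simp add: fQ)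
    also have "\<dots> = A*Y - A*(Q*Y)" using dY dims by (simp add: mdistL)
    also have "A*Y = A*(B*C)" unfolding Y_def using dims by (simp add: g1')
    also have "Q*Y = - R" unfolding Y_def by (rule QW)
    finally show ?thesis using dims dR by (simp add: msubneg)
  qed
  have second: "A * B * C * (BCi * B * P * G * Q * B * ABi) * (A * B * C) = A*R"
  proof -
    define V where "V = G*R"
    define U where "U = B*(P*V)"
    have dV: "dim_row V = p" "dim_col V = q" unfolding V_def using dims dR by auto
    have dU: "dim_row U = n" "dim_col U = q" unfolding U_def using dims dV by auto
    have "A * B * C * (BCi * B * P * G * Q * B * ABi) * (A * B * C)
        = A*(B*(C*(BCi*(B*(P*(G*(Q*(B*(ABi*(A*(B*C)))))))))))"
      using dims by (simp add: massoc)
    also have "\<dots> = - (A*(B*(C*(BCi*U))))" unfolding QW U_def V_def using dims dR by simp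
    also have "\<dots> = - (A*(U - Q*U))" using dU by (simp add: fQ)
    also have "\<dots> = - (A*U - A*(Q*U))" using dU dims by (simp add: mdistL)
    also have "A*U = 0\<^sub>m m q" unfolding U_def using dV z1 by simp
    also have "Q*U = R" unfolding U_def V_def R_def using dims by (simp add: hT)
    finally show ?thesis using dims dR by (simp add: mzerosub)
  qed
  have "A * B * C * (BCi * B * ABi - BCi * B * P * G * Q * B * ABi) * (A * B * C)
      = A * B * C * (BCi * B * ABi) * (A * B * C) - A * B * C * (BCi * B * P * G * Q * B * ABi) * (A * B * C)"
    using dims by (simp add: mdistL mdistR)
  also have "\<dots> = A*(B*C) + A*R - A*R" unfolding first second ..
  also have "\<dots> = A*B*C" using dims dR by (simp add: mcancel massoc)
  finally show ?thesis unfolding P_def Q_def G_def .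
qed

end
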